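(* Let $N\ge 1$, $r\in\{1,\dots,N\}$, $m\ge 2$ an integer, and $\alpha\in\mathbb{C}^{N\times N}$ (independent of $\epsilon$). Let $\beta_{m-1},\beta_m$ be $N\times N$ matrix-valued asymptotic expansions in a small parameter $\epsilon\to 0$ of the form $$\beta_{m-1}=\beta_{m-1,0}+\beta_{m-1,1}\epsilon+O(\epsilon^2),\qquad \beta_m=\beta_{m,0}+\beta_{m,1}\epsilon+O(\epsilon^2),\qquad \beta_{m-1,i},\beta_{m,i}\in\mathbb{C}^{N\times N},$$ where all entries in the first $r$ rows of $\beta_{m,0}$ vanish, and $\det\beta_m=O(\epsilon^{r})$. Define $\beta_{m+1},\beta_{m+2},\beta_{m+3},\beta_{m+4}$ by the matrix discrete Painlevé I recursion $$\beta_{n+1}=n\beta_n^{-1}-\beta_{n-1}-\beta_n-\alpha .$$ Assume that, as $\epsilon\to0$, $$\det\beta_{m+1}=O(\epsilon^{-r}),\quad \det\beta_{m+2}=O(\epsilon^{-r}),\quad \det\beta_{m+3}=O(\epsilon^{r}),\quad \det\beta_{m+4}=O(1).$$ Then the singularity is confined with confinement time $4$: $\beta_{m+4}=O(1)$ as $\epsilon\to0$, i.e. $\beta_{m+4}$ has an asymptotic expansion with no negative powers of $\epsilon$ (and, by the hypothesis on its determinant, it is invertible at $\epsilon=0$), so that neither poles nor zeros persist at step $m+4$.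
   Context: All expansions are formal/asymptotic expansions in powers of $\epsilon$ with matrix coefficients; inverses are taken in the ring of such (Laurent) expansions. A condition $\det X=O(\epsilon^{k})$ is understood in the paper's sense of exact order: $\det X=c\,\epsilon^{k}+O(\epsilon^{k+1})$ with $c\neq0$. The confinement time is the minimum number of iterations of the recursion, after the appearance of a zero (a matrix $\beta_m$ with singular leading coefficient), needed to recover a matrix expansion with neither poles (negative powers of $\epsilon$) nor zeros (vanishing determinant at $\epsilon=0$). *)

theory Defs
  imports "Jordan_Normal_Form.Determinant" "HOL-Computational_Algebra.Formal_Laurent_Series"
begin

text \<open>Matrix-valued formal expansions in epsilon are represented as N x N matrices
  whose entries are formal Laurent series in epsilon over the complex numbers.\<close>

definition minv :: "'a::field mat \<Rightarrow> 'a mat" where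
  "minv A = inverse (det A) \<cdot>\<^sub>m adj_mat A"

definition dPI_step :: "nat \<Rightarrow> complex fls mat \<Rightarrow> complex fls mat \<Rightarrow> complex fls mat \<Rightarrow> complex fls mat" where
  "dPI_step n bprev b alpha = of_nat n \<cdot>\<^sub>m minv b - bprev - b - alpha"

definition exact_order :: "complex fls \<Rightarrow> int \<Rightarrow> bool" where
  "exact_order x k \<longleftrightarrow> x \<noteq> 0 \<and> fls_subdegree x = k"

definition no_poles :: "complex fls mat \<Rightarrow> bool" where
  "no_poles A \<longleftrightarrow> (\<forall>i<dim_row A. \<forall>j<dim_col A. fls_subdegree (A $$ (i,j)) \<ge> 0)"

definition coeff_mat :: "complex fls mat \<Rightarrow> int \<Rightarrow> complex mat" where
  "coeff_mat A k = map_mat (\<lambda>x. fls_nth x k) A"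

definition const_mat :: "complex mat \<Rightarrow> complex fls mat" where
  "const_mat A = map_mat fls_const A"

end

theory Submission imports Defs begin


definition reg :: "complex fls \<Rightarrow> bool" where "reg x \<longleftrightarrow> 0 \<le> fls_subdegree x"

lemma reg_0[simp]: "reg 0" by (simp add: reg_def)
lemma reg_1[simp]: "reg 1" by (simp add: reg_def)
lemma reg_of_nat[simp]: "reg (of_nat k)" by (simp add: reg_def)
lemma reg_const[simp]: "reg (fls_const c)" by (simp add: reg_def)
lemma reg_add[intro]: "reg x \<Longrightarrow> reg y \<Longrightarrow> reg (x + y)"
  unfolding reg_def by (cases "x + y = 0") (auto dest!: fls_plus_subdegree)
lemma reg_uminus[intro]: "reg x \<Longrightarrow> reg (- x)"
  unfolding reg_def by simp
lemma reg_diff[intro]: "reg x \<Longrightarrow> reg y \<Longrightarrow> reg (x - y)"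
  using reg_add[of x "-y"] reg_uminus[of y] by simp
lemma reg_mult[intro]: "reg x \<Longrightarrow> reg y \<Longrightarrow> reg (x * y)"
  unfolding reg_def by (rule fls_mult_subdegree_ge_0)
lemma reg_sum[intro]: "(\<And>k. k \<in> S \<Longrightarrow> reg (f k)) \<Longrightarrow> reg (sum f S)"
  by (induction S rule: infinite_finite_induct) auto

interpretation fps_fls: comm_ring_hom "fps_to_fls :: complex fps \<Rightarrow> complex fls"
  by unfold_locales (simp_all add: fls_times_fps_to_fls)

interpretation fps0: comm_ring_hom "(\<lambda>f::complex fps. f $ 0)"
  by unfold_locales (simp_all add: fps_mult_nth_0)

lemma np_map: assumes "no_poles A"
  shows "A = map_mat fps_to_fls (map_mat fls_regpart A)"
  using assms unfolding no_poles_def by (intro eq_matI) auto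

lemma reg_det: assumes "no_poles A" shows "reg (det A)"
proof -
  have "det A = fps_to_fls (det (map_mat fls_regpart A))"
    by (subst np_map[OF assms]) (rule fps_fls.hom_det)
  thus ?thesis unfolding reg_def by (simp add: fls_subdegree_fls_to_fps_gt0)
qed

lemma np_reg: "no_poles A \<longleftrightarrow> (\<forall>i<dim_row A. \<forall>j<dim_col A. reg (A $$ (i,j)))"
  by (simp add: no_poles_def reg_def)

lemma np_add[intro]: "A \<in> carrier_mat n k \<Longrightarrow> B \<in> carrier_mat n k \<Longrightarrow> no_poles A \<Longrightarrow> no_poles B \<Longrightarrow> no_poles (A + B)"
  unfolding np_reg by auto
lemma np_diff[intro]: "A \<in> carrier_mat n k \<Longrightarrow> B \<in> carrier_mat n k \<Longrightarrow> no_poles A \<Longrightarrow> no_poles B \<Longrightarrow> no_poles (A - B)"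
  unfolding np_reg by auto
lemma np_uminus[intro]: "no_poles A \<Longrightarrow> no_poles (- A)"
  unfolding np_reg by auto
lemma np_smult[intro]: "reg c \<Longrightarrow> no_poles A \<Longrightarrow> no_poles (c \<cdot>\<^sub>m A)"
  unfolding np_reg by auto
lemma np_one[intro]: "no_poles (1\<^sub>m n)"
  unfolding np_reg by auto
lemma np_const[intro]: "no_poles (const_mat a)"
  unfolding np_reg const_mat_def by auto
lemma np_mult[intro]: "A \<in> carrier_mat n k \<Longrightarrow> B \<in> carrier_mat k l \<Longrightarrow> no_poles A \<Longrightarrow> no_poles B \<Longrightarrow> no_poles (A * B)"
  unfolding np_reg by (auto simp: scalar_prod_def intro!: reg_sum reg_mult)

lemma reg_pow: "reg x \<Longrightarrow> reg (x ^ k)"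
  by (induction k) auto

lemma np_delete: "no_poles A \<Longrightarrow> no_poles (mat_delete A i j)"
  unfolding np_reg mat_delete_def by auto

lemma np_adj: assumes "no_poles A" shows "no_poles (adj_mat A)"
  using assms unfolding np_reg adj_mat_def cofactor_def
  by (auto intro!: reg_mult reg_pow reg_det np_delete simp: np_reg[symmetric])

lemma np_minv: assumes "no_poles A" "fls_subdegree (det A) = 0"
  shows "no_poles (minv A)"
  unfolding minv_def using assms by (intro np_smult np_adj) (simp add: reg_def)

lemma minv_carrier[intro]: "A \<in> carrier_mat n n \<Longrightarrow> minv A \<in> carrier_mat n n"
  unfolding minv_def using adj_mat(1) by (metis smult_carrier_mat)

lemma smult_smult_mat: "a \<cdot>\<^sub>m (b \<cdot>\<^sub>m A) = (a * b) \<cdot>\<^sub>m (A :: 'a::semigroup_mult mat)"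
  by (intro eq_matI) (auto simp: mult.assoc)

lemma one_smult_mat[simp]: "(1::'a::monoid_mult) \<cdot>\<^sub>m A = A"
  by (intro eq_matI) auto

lemma minv_r: assumes A: "A \<in> carrier_mat n n" and d: "det A \<noteq> 0"
  shows "A * minv A = 1\<^sub>m n"
proof -
  have "A * minv A = inverse (det A) \<cdot>\<^sub>m (A * adj_mat A)"
    unfolding minv_def using A adj_mat(1)[OF A] by (rule mult_smult_distrib)
  also have "\<dots> = 1\<^sub>m n" using d by (simp add: adj_mat(2)[OF A] smult_smult_mat)
  finally show ?thesis .
qed

lemma minv_l: assumes A: "A \<in> carrier_mat n n" and d: "det A \<noteq> 0"
  shows "minv A * A = 1\<^sub>m n"
proof -
  have "minv A * A = inverse (det A) \<cdot>\<^sub>m (adj_mat A * A)"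
    unfolding minv_def by (rule mult_smult_assoc_mat[OF adj_mat(1)[OF A] A])
  also have "\<dots> = 1\<^sub>m n" using d by (simp add: adj_mat(3)[OF A] smult_smult_mat)
  finally show ?thesis .
qed

lemma minv_unique: assumes A: "A \<in> carrier_mat n n" and X: "X \<in> carrier_mat n n"
  and AX: "A * X = 1\<^sub>m n"
  shows "minv A = X"
proof -
  have "det A * det X = 1" using det_mult[OF A X] AX by simp
  hence d: "det A \<noteq> 0" by auto
  have "minv A = minv A * (A * X)" using AX right_mult_one_mat[OF minv_carrier[OF A]] by simp
  also have "\<dots> = (minv A * A) * X" using A X by (simp add: assoc_mult_mat[of _ n n _ n _ n] minv_carrier)
  also have "\<dots> = X" using minv_l[OF A d] X by simp
  finally show ?thesis .
qed



lemma sd_mult: "x \<noteq> 0 \<Longrightarrow> y \<noteq> 0 \<Longrightarrow> fls_subdegree (x * (y::complex fls)) = fls_subdegree x + fls_subdegree y"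
  by simp

theorem theorem1:
  fixes N r m :: nat and alpha :: "complex mat"
    and b0 b1 b2 b3 b4 b5 :: "complex fls mat"
  assumes "N \<ge> 1" and "1 \<le> r" and "r \<le> N" and "m \<ge> 2"
    and "alpha \<in> carrier_mat N N"
    and "b0 \<in> carrier_mat N N" and "b1 \<in> carrier_mat N N"
    and "no_poles b0" and "no_poles b1"
    and "\<forall>i<r. \<forall>j<N. fls_nth (b1 $$ (i,j)) 0 = 0"
    and "exact_order (det b1) (int r)"
    and "b2 = dPI_step m b0 b1 (const_mat alpha)"
    and "b3 = dPI_step (m+1) b1 b2 (const_mat alpha)"
    and "b4 = dPI_step (m+2) b2 b3 (const_mat alpha)"
    and "b5 = dPI_step (m+3) b3 b4 (const_mat alpha)"
    and "exact_order (det b2) (- int r)"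
    and "exact_order (det b3) (- int r)"
    and "exact_order (det b4) (int r)"
    and "exact_order (det b5) 0"
  shows "no_poles b5 \<and> det (coeff_mat b5 0) \<noteq> 0"
proof -
  define n :: "complex fls" where "n = of_nat m"
  define a where "a = const_mat alpha"
  define I where "I = (1\<^sub>m N :: complex fls mat)"
  note ex = assms(11,16,17,18,19)[unfolded exact_order_def]
  have ca: "a \<in> carrier_mat N N" using assms(5) unfolding a_def const_mat_def by auto
  have c0: "b0 \<in> carrier_mat N N" and c1: "b1 \<in> carrier_mat N N" using assms(6,7) .
  have cI: "I \<in> carrier_mat N N" unfolding I_def by simp
  have npa: "no_poles a" unfolding a_def by blast
  have npI: "no_poles I" unfolding I_def by blast
  have regn: "reg n" "reg (n+1)" "reg (n+2)" "reg (n+3)" unfolding n_def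
    using reg_of_nat[of m] reg_of_nat[of "m+1"] reg_of_nat[of "m+2"] reg_of_nat[of "m+3"] by (simp_all add: add.commute)
  define Bi where "Bi = minv b1"
  have cBi: "Bi \<in> carrier_mat N N" unfolding Bi_def using c1 by blast
  have hB1: "b1 * Bi = I" unfolding Bi_def I_def using minv_r[OF c1] ex by auto
  have hB2: "Bi * b1 = I" unfolding Bi_def I_def using minv_l[OF c1] ex by auto
  have b2: "b2 = n \<cdot>\<^sub>m Bi - b0 - b1 - a" using assms(12) unfolding dPI_step_def n_def Bi_def a_def by simp
  have c2: "b2 \<in> carrier_mat N N" unfolding b2 using cBi c0 c1 ca by auto
  define C1 where "C1 = b0 + b1 + a"
  have cC1: "C1 \<in> carrier_mat N N" unfolding C1_def using c0 c1 ca by auto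
  have npC1: "no_poles C1" unfolding C1_def using c0 c1 ca assms(8,9) npa by (intro np_diff[where n=N and k=N] np_add[where n=N and k=N] np_smult np_mult[where n=N and k=N and l=N] np_uminus) auto
  define BC1 where "BC1 = b1 * C1"
  have cBC1: "BC1 \<in> carrier_mat N N" unfolding BC1_def using c1 cC1 by auto
  define M1 where "M1 = b1 * b2"
  have cM1: "M1 \<in> carrier_mat N N" unfolding M1_def using c1 c2 by auto
  have eq1: "M1 = n \<cdot>\<^sub>m I - BC1"
  proof -
    have "M1 = n \<cdot>\<^sub>m (b1 * Bi) - b1 * C1" unfolding M1_def b2 C1_def
      by (rule eq_matI) (use c0 c1 cBi ca in \<open>simp_all add: scalar_prod_def algebra_simps sum_distrib_left sum_subtractf sum.distrib\<close>)
    thus ?thesis unfolding hB1 BC1_def .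
  qed
  have npM1: "no_poles M1" unfolding eq1 BC1_def using regn npI cI c1 cC1 assms(9) npC1 by (intro np_diff[where n=N and k=N] np_add[where n=N and k=N] np_smult np_mult[where n=N and k=N and l=N] np_uminus) auto
  have dM1: "fls_subdegree (det M1) = 0" "det M1 \<noteq> 0"
    unfolding M1_def det_mult[OF c1 c2] using ex by auto
  define Q1 where "Q1 = minv M1"
  have cQ1: "Q1 \<in> carrier_mat N N" unfolding Q1_def using cM1 by blast
  have npQ1: "no_poles Q1" unfolding Q1_def using np_minv npM1 dM1 by auto
  have hQ1: "M1 * Q1 = I" unfolding Q1_def I_def using minv_r[OF cM1] dM1 by auto
  have b2': "b2 = Bi * M1" unfolding M1_def
    using assoc_mult_mat[OF cBi c1 c2, symmetric] hB2 c2 unfolding I_def by simp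
  define P1 where "P1 = Q1 * b1"
  have cP1: "P1 \<in> carrier_mat N N" unfolding P1_def using cQ1 c1 by auto
  have npP1: "no_poles P1" unfolding P1_def using cQ1 c1 npQ1 assms(9) by (intro np_diff[where n=N and k=N] np_add[where n=N and k=N] np_smult np_mult[where n=N and k=N and l=N] np_uminus) auto
  have ib2: "minv b2 = P1"
  proof (rule minv_unique[OF c2 cP1])
    have "b2 * P1 = Bi * ((M1 * Q1) * b1)" unfolding b2' P1_def
      using cBi cM1 cQ1 c1 by (simp add: assoc_mult_mat[of _ N N _ N _ N])
    also have "\<dots> = 1\<^sub>m N" using hQ1 hB2 c1 unfolding I_def by simp
    finally show "b2 * P1 = 1\<^sub>m N" .
  qed
  have b3: "b3 = (n+1) \<cdot>\<^sub>m P1 - b1 - b2 - a" using assms(13) ib2 unfolding dPI_step_def n_def a_def by (simp add: add.commute)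
  have c3: "b3 \<in> carrier_mat N N" unfolding b3 using cP1 c1 c2 ca by auto
  define C2 where "C2 = (n+1) \<cdot>\<^sub>m P1 - b1 + C1 - a"
  have cC2: "C2 \<in> carrier_mat N N" unfolding C2_def using cP1 c1 cC1 ca by auto
  have npC2: "no_poles C2" unfolding C2_def using cP1 c1 cC1 ca npP1 assms(9) npC1 npa regn by (intro np_diff[where n=N and k=N] np_add[where n=N and k=N] np_smult np_mult[where n=N and k=N and l=N] np_uminus) auto
  define M2 where "M2 = b1 * b3"
  have cM2: "M2 \<in> carrier_mat N N" unfolding M2_def using c1 c3 by auto
  note cc = c0 c1 c2 c3 ca cI cBi cC1 cC2 cP1 cQ1 cM1 cM2 cBC1
  have eq2: "M2 = - (n \<cdot>\<^sub>m I) + b1 * C2"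
  proof -
    have "M2 = (n+1) \<cdot>\<^sub>m (b1 * P1) - b1 * b1 - M1 - b1 * a" unfolding M2_def b3 M1_def
      by (rule eq_matI) (use cc in \<open>simp_all add: scalar_prod_def algebra_simps sum_distrib_left sum_subtractf sum.distrib\<close>)
    also have "\<dots> = - (n \<cdot>\<^sub>m I) + b1 * C2" unfolding eq1 BC1_def C2_def
      by (rule eq_matI) (use cc in \<open>simp_all add: scalar_prod_def algebra_simps sum_distrib_left sum_subtractf sum.distrib\<close>)
    finally show ?thesis .
  qed
  have npM2: "no_poles M2" unfolding eq2 using regn npI cI c1 cC2 assms(9) npC2 by (intro np_diff[where n=N and k=N] np_add[where n=N and k=N] np_smult np_mult[where n=N and k=N and l=N] np_uminus) auto
  have dM2: "fls_subdegree (det M2) = 0" "det M2 \<noteq> 0"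
    unfolding M2_def det_mult[OF c1 c3] using ex by auto
  define Q2 where "Q2 = minv M2"
  have cQ2: "Q2 \<in> carrier_mat N N" unfolding Q2_def using cM2 by blast
  have npQ2: "no_poles Q2" unfolding Q2_def using np_minv npM2 dM2 by auto
  have hQ2: "M2 * Q2 = I" unfolding Q2_def I_def using minv_r[OF cM2] dM2 by auto
  have b3': "b3 = Bi * M2" unfolding M2_def
    using assoc_mult_mat[OF cBi c1 c3, symmetric] hB2 c3 unfolding I_def by simp
  define P2 where "P2 = Q2 * b1"
  have cP2: "P2 \<in> carrier_mat N N" unfolding P2_def using cQ2 c1 by auto
  have npP2: "no_poles P2" unfolding P2_def using cQ2 c1 npQ2 assms(9) by (intro np_diff[where n=N and k=N] np_add[where n=N and k=N] np_smult np_mult[where n=N and k=N and l=N] np_uminus) auto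
  have ib3: "minv b3 = P2"
  proof (rule minv_unique[OF c3 cP2])
    have "b3 * P2 = Bi * ((M2 * Q2) * b1)" unfolding b3' P2_def
      using cBi cM2 cQ2 c1 by (simp add: assoc_mult_mat[of _ N N _ N _ N])
    also have "\<dots> = 1\<^sub>m N" using hQ2 hB2 c1 unfolding I_def by simp
    finally show "b3 * P2 = 1\<^sub>m N" .
  qed
  have b4: "b4 = (n+2) \<cdot>\<^sub>m P2 - b2 - b3 - a" using assms(14) ib3 unfolding dPI_step_def n_def a_def by (simp add: add.commute)
  have c4: "b4 \<in> carrier_mat N N" unfolding b4 using cP2 c3 c2 ca by auto
  define G where "G = (n+2) \<cdot>\<^sub>m Q2 - (n+1) \<cdot>\<^sub>m Q1 + I"
  have cG: "G \<in> carrier_mat N N" unfolding G_def using cQ2 cQ1 cI by auto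
  have npG: "no_poles G" unfolding G_def using cQ2 cQ1 cI npQ1 npQ2 npI regn by (intro np_diff[where n=N and k=N] np_add[where n=N and k=N] np_smult np_mult[where n=N and k=N and l=N] np_uminus) auto
  have b4': "b4 = G * b1"
  proof -
    have "G * b1 = ((n+2) \<cdot>\<^sub>m Q2 - (n+1) \<cdot>\<^sub>m Q1) * b1 + I * b1" unfolding G_def
      using cQ2 cQ1 cI c1 by (intro add_mult_distrib_mat[of _ N N]) auto
    also have "\<dots> = (n+2) \<cdot>\<^sub>m P2 - (n+1) \<cdot>\<^sub>m P1 + b1" unfolding I_def P1_def P2_def using c1 cQ1 cQ2
      by (subst left_mult_one_mat) (auto intro!: eq_matI simp: scalar_prod_def algebra_simps sum_distrib_left sum_subtractf sum.distrib)
    also have "\<dots> = b4" unfolding b4 b3 by (rule eq_matI) (use cc cP2 in \<open>simp_all add: algebra_simps\<close>)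
    finally show ?thesis by simp
  qed
  have dG: "fls_subdegree (det G) = 0" "det G \<noteq> 0"
    using ex det_mult[OF cG c1] unfolding b4'[symmetric] by (auto simp: mult_eq_0_iff)
  define Q3 where "Q3 = minv G"
  have cQ3: "Q3 \<in> carrier_mat N N" unfolding Q3_def using cG by auto
  have npQ3: "no_poles Q3" unfolding Q3_def using np_minv npG dG by auto
  have hQ3: "G * Q3 = I" unfolding Q3_def I_def using minv_r[OF cG] dG by auto
  define P3 where "P3 = Bi * Q3"
  have cP3: "P3 \<in> carrier_mat N N" unfolding P3_def using cBi cQ3 by auto
  have ib4: "minv b4 = P3"
  proof (rule minv_unique[OF c4 cP3])
    have "b4 * P3 = G * ((b1 * Bi) * Q3)" unfolding b4' P3_def
      using cG c1 cBi cQ3 by (simp add: assoc_mult_mat[of _ N N _ N _ N])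
    also have "\<dots> = 1\<^sub>m N" using hQ3 hB1 cQ3 unfolding I_def by simp
    finally show "b4 * P3 = 1\<^sub>m N" .
  qed
  have b5: "b5 = (n+3) \<cdot>\<^sub>m P3 - b3 - b4 - a" using assms(15) ib4 unfolding dPI_step_def n_def a_def by (simp add: add.commute)
  have c5: "b5 \<in> carrier_mat N N" unfolding b5 using cP3 c3 c4 ca by auto
  define D1 where "D1 = C1 * Q1"
  define D2 where "D2 = C2 * Q2"
  have cD1: "D1 \<in> carrier_mat N N" unfolding D1_def using cC1 cQ1 by auto
  have cD2: "D2 \<in> carrier_mat N N" unfolding D2_def using cC2 cQ2 by auto
  have npD1: "no_poles D1" unfolding D1_def using cC1 cQ1 npC1 npQ1 by (intro np_diff[where n=N and k=N] np_add[where n=N and k=N] np_smult np_mult[where n=N and k=N and l=N] np_uminus) auto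
  have npD2: "no_poles D2" unfolding D2_def using cC2 cQ2 npC2 npQ2 by (intro np_diff[where n=N and k=N] np_add[where n=N and k=N] np_smult np_mult[where n=N and k=N and l=N] np_uminus) auto
  define BD1 where "BD1 = b1 * D1"
  define BD2 where "BD2 = b1 * D2"
  have cBD1: "BD1 \<in> carrier_mat N N" unfolding BD1_def using c1 cD1 by auto
  have cBD2: "BD2 \<in> carrier_mat N N" unfolding BD2_def using c1 cD2 by auto
  have cnI: "n \<cdot>\<^sub>m I \<in> carrier_mat N N" using cI by simp
  have e6: "n \<cdot>\<^sub>m Q1 - BD1 = I"
  proof -
    have "I = (n \<cdot>\<^sub>m I - BC1) * Q1" using hQ1 eq1 by simp
    also have "\<dots> = (n \<cdot>\<^sub>m I) * Q1 - BC1 * Q1" by (rule minus_mult_distrib_mat[OF cnI cBC1 cQ1])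
    also have "\<dots> = n \<cdot>\<^sub>m Q1 - BD1" unfolding BD1_def D1_def BC1_def
      using mult_smult_assoc_mat[OF cI cQ1, of n] left_mult_one_mat[OF cQ1] assoc_mult_mat[OF c1 cC1 cQ1]
      unfolding I_def by simp
    finally show ?thesis by simp
  qed
  have e6': "n \<cdot>\<^sub>m Q1 = I + BD1"
  proof -
    have "n \<cdot>\<^sub>m Q1 = (n \<cdot>\<^sub>m Q1 - BD1) + BD1" by (rule eq_matI) (use cQ1 cBD1 in auto)
    thus ?thesis unfolding e6 .
  qed
  have e7: "- (n \<cdot>\<^sub>m Q2) + BD2 = I"
  proof -
    have cBC2: "b1 * C2 \<in> carrier_mat N N" using c1 cC2 by auto
    have "I = (- (n \<cdot>\<^sub>m I) + b1 * C2) * Q2" using hQ2 eq2 by simp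
    also have "\<dots> = (- (n \<cdot>\<^sub>m I)) * Q2 + (b1 * C2) * Q2"
      by (rule add_mult_distrib_mat[OF _ cBC2 cQ2]) (use cnI in auto)
    also have "\<dots> = - (n \<cdot>\<^sub>m Q2) + BD2" unfolding BD2_def D2_def
      using mult_smult_assoc_mat[OF cI cQ2, of n] left_mult_one_mat[OF cQ2] assoc_mult_mat[OF c1 cC2 cQ2]
        uminus_mult_left_mat[of "n \<cdot>\<^sub>m I" Q2] cI cQ2
      unfolding I_def by simp
    finally show ?thesis by simp
  qed
  have e7': "n \<cdot>\<^sub>m Q2 = BD2 - I"
  proof -
    have "n \<cdot>\<^sub>m Q2 = BD2 - (- (n \<cdot>\<^sub>m Q2) + BD2)" by (rule eq_matI) (use cQ2 cBD2 in auto)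
    thus ?thesis unfolding e7 .
  qed
  define Y where "Y = (n+2) \<cdot>\<^sub>m D2 - (n+1) \<cdot>\<^sub>m D1"
  have cY: "Y \<in> carrier_mat N N" unfolding Y_def using cD1 cD2 by auto
  have npY: "no_poles Y" unfolding Y_def using cD1 cD2 npD1 npD2 regn by (intro np_diff[where n=N and k=N] np_add[where n=N and k=N] np_smult np_mult[where n=N and k=N and l=N] np_uminus) auto
  define BY where "BY = b1 * Y"
  have cBY: "BY \<in> carrier_mat N N" unfolding BY_def using c1 cY by auto
  have eG: "n \<cdot>\<^sub>m G = - ((n+3) \<cdot>\<^sub>m I) + BY"
  proof -
    have "n \<cdot>\<^sub>m G = (n+2) \<cdot>\<^sub>m (n \<cdot>\<^sub>m Q2) - (n+1) \<cdot>\<^sub>m (n \<cdot>\<^sub>m Q1) + n \<cdot>\<^sub>m I"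
      unfolding G_def by (rule eq_matI) (use cQ1 cQ2 cI in \<open>auto simp: algebra_simps\<close>)
    also have "\<dots> = - ((n+3) \<cdot>\<^sub>m I) + BY" unfolding e6' e7' BY_def Y_def BD1_def BD2_def
      by (rule eq_matI) (use cc cD1 cD2 in \<open>simp_all add: scalar_prod_def algebra_simps sum_distrib_left sum_subtractf sum.distrib\<close>)
    finally show ?thesis .
  qed
  define W where "W = Y * Q3"
  have cW: "W \<in> carrier_mat N N" unfolding W_def using cY cQ3 by auto
  have npW: "no_poles W" unfolding W_def using cY cQ3 npY npQ3 by (intro np_diff[where n=N and k=N] np_add[where n=N and k=N] np_smult np_mult[where n=N and k=N and l=N] np_uminus) auto
  define BW where "BW = b1 * W"
  have cBW: "BW \<in> carrier_mat N N" unfolding BW_def using c1 cW by auto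
  have e8: "- ((n+3) \<cdot>\<^sub>m Q3) + BW = n \<cdot>\<^sub>m I"
  proof -
    have cn3: "(n+3) \<cdot>\<^sub>m I \<in> carrier_mat N N" using cI by simp
    have "n \<cdot>\<^sub>m I = (n \<cdot>\<^sub>m G) * Q3" using mult_smult_assoc_mat[OF cG cQ3, of n] hQ3 by simp
    also have "\<dots> = (- ((n+3) \<cdot>\<^sub>m I)) * Q3 + BY * Q3" unfolding eG
      by (rule add_mult_distrib_mat[OF _ cBY cQ3]) (use cn3 in auto)
    also have "\<dots> = - ((n+3) \<cdot>\<^sub>m Q3) + BW" unfolding BW_def W_def BY_def
      using mult_smult_assoc_mat[OF cI cQ3, of "n+3"] left_mult_one_mat[OF cQ3] assoc_mult_mat[OF c1 cY cQ3]
        uminus_mult_left_mat[of "(n+3) \<cdot>\<^sub>m I" Q3] cI cQ3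
      unfolding I_def by simp
    finally show ?thesis by simp
  qed
  have e8': "(n+3) \<cdot>\<^sub>m Q3 = BW - n \<cdot>\<^sub>m I"
  proof -
    have "(n+3) \<cdot>\<^sub>m Q3 = BW - (- ((n+3) \<cdot>\<^sub>m Q3) + BW)" by (rule eq_matI) (use cQ3 cBW in auto)
    thus ?thesis unfolding e8 .
  qed
  have e9: "(n+3) \<cdot>\<^sub>m P3 = W - n \<cdot>\<^sub>m Bi"
  proof -
    have "(n+3) \<cdot>\<^sub>m P3 = Bi * ((n+3) \<cdot>\<^sub>m Q3)" unfolding P3_def
      by (rule mult_smult_distrib[OF cBi cQ3, symmetric])
    also have "\<dots> = Bi * BW - Bi * (n \<cdot>\<^sub>m I)" unfolding e8'
      by (rule mult_minus_distrib_mat[OF cBi cBW cnI])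
    also have "\<dots> = W - n \<cdot>\<^sub>m Bi" unfolding BW_def
      using assoc_mult_mat[OF cBi c1 cW, symmetric] hB2 left_mult_one_mat[OF cW] mult_smult_distrib[OF cBi cI, of n]
        right_mult_one_mat[OF cBi] unfolding I_def by simp
    finally show ?thesis .
  qed
  have b5': "b5 = W - (n+1) \<cdot>\<^sub>m P1 - b0 - b4 - a"
    unfolding b5 e9 b3 b2 by (rule eq_matI) (use cc cW c4 in \<open>simp_all add: algebra_simps\<close>)
  have npb4: "no_poles b4" unfolding b4' using cG c1 npG assms(9) by (intro np_diff[where n=N and k=N] np_add[where n=N and k=N] np_smult np_mult[where n=N and k=N and l=N] np_uminus) auto
  have np5: "no_poles b5" unfolding b5' using cW cP1 c0 c4 ca npW npP1 assms(8) npb4 npa regn by (intro np_diff[where n=N and k=N] np_add[where n=N and k=N] np_smult np_mult[where n=N and k=N and l=N] np_uminus) auto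
  define Rm where "Rm = map_mat fls_regpart b5"
  have b5R: "b5 = map_mat fps_to_fls Rm" unfolding Rm_def by (rule np_map[OF np5])
  have dR: "det b5 = fps_to_fls (det Rm)" by (subst b5R) (rule fps_fls.hom_det)
  have cm: "coeff_mat b5 0 = map_mat (\<lambda>f. f $ 0) Rm" unfolding coeff_mat_def Rm_def
    by (rule eq_matI) auto
  have "det (coeff_mat b5 0) = det Rm $ 0" unfolding cm by (rule fps0.hom_det)
  also have "\<dots> = fls_nth (det b5) 0" unfolding dR by simp
  also have "\<dots> \<noteq> 0" using ex(5) nth_fls_subdegree_nonzero[of "det b5"] by auto
  finally show ?thesis using np5 by simp
qed
end
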